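(* Let $n \geqslant 1$ and $k \geqslant 1$ be integers, and let $U$ be the function defined in the context. Let $A, C \geqslant 0$ be integers with $B := n - A - C \geqslant 0$ and $0 \leqslant A - C < k$. For integers $C'$ and $c$ with $c \equiv C' \pmod{k+1}$ put $l_{C'}(c) = \frac{C' - c}{k+1}$. Then $$U(A, C) - U(A-k, C+k) = \sum_{c \equiv C \ (\mathrm{mod}\ k+1)} \sum_{j \geqslant 0} \binom{l_C(c)}{j} \binom{n}{c+j} \binom{n - c - j - l_C(c) - 1}{B - j} - \sum_{c \equiv C-1 \ (\mathrm{mod}\ k+1)} \sum_{j \geqslant 0} \binom{l_{C-1}(c)}{j} \binom{n}{c+j} \binom{n - c - j - l_{C-1}(c) - 1}{B - j},$$ where the outer sums run over all integers $c$ in the indicated residue class (only finitely many terms are nonzero).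
   Context: Binomial coefficients are generalized: for an integer (possibly negative) $m$ and integer $t$, $\binom{m}{t} = \frac{m(m-1)\cdots(m-t+1)}{t!}$ if $t \geqslant 0$ and $\binom{m}{t} = 0$ if $t < 0$. The multinomial coefficient is $\binom{n}{a, c} = \frac{n!}{a!\, c!\, (n-a-c)!}$ if $a, c, n-a-c \geqslant 0$ and $0$ otherwise. The function $U : \mathbb{Z}^2 \to \mathbb{Z}$ (depending on $n$ and $k$) is defined by: $U(a,c) = 0$ if $a < 0$, $c < 0$ or $n - a - c < 0$; for $a, c, n-a-c \geqslant 0$ with $a \geqslant c$, recursively (in decreasing order of $a$) $$U(a,c) = \binom{n}{a, c} - \binom{n}{a+1, c-1} - U(a+1, c) + U(a+1+k, c-1-k) + U(a+1+k, c-k);$$ and for $a, c, n-a-c \geqslant 0$ with $a < c$, $U(a,c) = U(c,a)$. *)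

theory Defs
  imports Main "HOL-Library.Groups_Big_Fun"
begin

definition binom :: "int \<Rightarrow> int \<Rightarrow> int" where
  "binom m t = (if t < 0 then 0 else (\<Prod>i<nat t. m - int i) div fact (nat t))"

definition multinom :: "int \<Rightarrow> int \<Rightarrow> int \<Rightarrow> int" where
  "multinom n a c = (if a \<ge> 0 \<and> c \<ge> 0 \<and> n - a - c \<ge> 0
     then fact (nat n) div (fact (nat a) * fact (nat c) * fact (nat (n - a - c))) else 0)"

function U :: "nat \<Rightarrow> nat \<Rightarrow> int \<Rightarrow> int \<Rightarrow> int" where
  "U n k a c =
    (if a < 0 \<or> c < 0 \<or> int n - a - c < 0 then 0
     else if a < c then U n k c a
     else multinom (int n) a c - multinom (int n) (a + 1) (c - 1) - U n k (a + 1) c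
          + U n k (a + 1 + int k) (c - 1 - int k) + U n k (a + 1 + int k) (c - int k))"
  by pat_completeness auto
termination
  by (relation "measures [\<lambda>(n, k, a, c). nat (int n + 1 - max a c),
                           \<lambda>(n, k, a, c). if a < c then 1 else 0]") auto

definition term_c :: "nat \<Rightarrow> nat \<Rightarrow> int \<Rightarrow> int \<Rightarrow> int \<Rightarrow> int" where
  "term_c n k B C' c =
    (if c mod (int k + 1) = C' mod (int k + 1) then
       (let l = (C' - c) div (int k + 1) in
        Sum_any (\<lambda>j::nat. binom l (int j) * binom (int n) (c + int j)
                            * binom (int n - c - int j - l - 1) (B - int j)))
     else 0)"

end

theory Submission
  imports Defs Complex_Main
begin

declare U.simps[simp del]

lemma binom_neg[simp]: "t < 0 \<Longrightarrow> binom m t = 0"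
  by (simp add: binom_def)

lemma binom_0[simp]: "binom m 0 = 1"
  by (simp add: binom_def)

lemma binom_nat: "m \<ge> 0 \<Longrightarrow> t \<ge> 0 \<Longrightarrow> binom m t = int (nat m choose nat t)"
  using gbinomial_nneg[of m "nat t", unfolded gbinomial_prod_rev]
  by (simp add: binom_def atLeast0LessThan)

lemma binom_vanish: "0 \<le> m \<Longrightarrow> m < t \<Longrightarrow> binom m t = 0"
  by (simp add: binom_nat)

lemma binom_pascal: "binom M T = binom (M - 1) T + binom (M - 1) (T - 1)"
proof (cases "T \<ge> 1")
  case True
  have "nat T = Suc (nat (T - 1))" using True by simp
  then show ?thesis using True gbinomial_int_Suc_Suc[of "M - 1" "nat (T - 1)", unfolded gbinomial_prod_rev]
    by (simp add: binom_def atLeast0LessThan)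
next
  case False
  then show ?thesis by (cases "T = 0") auto
qed

lemma multinom_sym: "multinom n a c = multinom n c a"
  unfolding multinom_def by (auto simp: algebra_simps)

lemma multinom_binom:
  assumes "n \<ge> 0"
  shows "multinom n (n - b - c) c = binom n c * binom (n - c) b"
proof -
  consider "c < 0" | "c > n" | "b < 0" | "b > n - c" | "0 \<le> c \<and> c \<le> n \<and> 0 \<le> b \<and> b \<le> n - c"
    by linarith
  then show ?thesis
  proof cases
    case 1 then show ?thesis by (simp add: multinom_def)
  next
    case 2 then show ?thesis using assms
      by (cases "b < 0") (auto simp: multinom_def binom_vanish)
  next
    case 3 then show ?thesis by (simp add: multinom_def)
  next
    case 4 then show ?thesis using assms
      by (cases "c < 0"; cases "c > n") (auto simp: multinom_def binom_vanish)
  next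
    case 5
    define N where "N = nat n"
    define cc where "cc = nat c"
    define bb where "bb = nat b"
    have n: "n = int N" and c: "c = int cc" and b: "b = int bb" and le: "cc + bb \<le> N"
      using 5 assms by (auto simp: N_def cc_def bb_def)
    have e1: "fact cc * fact (N - cc) * (N choose cc) = (fact N :: nat)"
      using le by (intro binomial_fact_lemma) simp
    have e2: "fact bb * fact (N - cc - bb) * ((N - cc) choose bb) = (fact (N - cc) :: nat)"
      using le by (intro binomial_fact_lemma) simp
    have e3: "(fact N :: nat) = (N choose cc) * ((N - cc) choose bb) * (fact (N - bb - cc) * fact cc * fact bb)"
    proof -
      have "N - bb - cc = N - cc - bb" by simp
      then show ?thesis using e1 e2 by (metis mult.assoc mult.commute)
    qed
    have e4: "(fact N :: int) = int ((N choose cc) * ((N - cc) choose bb)) * (fact (N - bb - cc) * fact cc * fact bb)"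
    proof -
      have "int (fact N) = int ((N choose cc) * ((N - cc) choose bb) * (fact (N - bb - cc) * fact cc * fact bb))"
        using e3 by simp
      then show ?thesis by (simp only: of_nat_mult of_nat_fact)
    qed
    have pos: "(fact (N - bb - cc) * fact cc * fact bb :: int) \<noteq> 0" by simp
    have abc: "n - b - c = int (N - bb - cc)" using le by (simp add: n b c)
    have "multinom n (n - b - c) c = fact N div (fact (N - bb - cc) * fact cc * fact bb)"
    proof -
      have nn: "nat (int N - (int bb + int cc)) = N - (bb + cc)" using le by simp
      show ?thesis unfolding multinom_def abc using le by (simp add: n b c nn)
    qed
    also have "\<dots> = int ((N choose cc) * ((N - cc) choose bb))"
      using pos by (subst e4) simp
    also have "\<dots> = binom n c * binom (n - c) b"
    proof -
      have nc: "n - c = int (N - cc)" using le by (simp add: n c)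
      have 1: "binom n c = int (N choose cc)" unfolding n c by (subst binom_nat) auto
      have 2: "binom (n - c) b = int ((N - cc) choose bb)" unfolding nc b by (subst binom_nat) auto
      show ?thesis unfolding 1 2 by simp
    qed
    finally show ?thesis .
  qed
qed

definition Sf :: "nat \<Rightarrow> int \<Rightarrow> int \<Rightarrow> int \<Rightarrow> int" where
  "Sf n b l c = (\<Sum>j\<le>nat b. binom l (int j) * binom (int n) (c + int j)
                  * binom (int n - c - int j - l - 1) (b - int j))"

lemma Sf_ext:
  assumes "nat b \<le> J"
  shows "Sf n b l c = (\<Sum>j\<le>J. binom l (int j) * binom (int n) (c + int j)
                  * binom (int n - c - int j - l - 1) (b - int j))"
  unfolding Sf_def by (rule sum.mono_neutral_left) (use assms in auto)

lemma Sf_negb: "b < 0 \<Longrightarrow> Sf n b l c = 0"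
  by (simp add: Sf_def)

lemma Sf_below: "c + b < 0 \<Longrightarrow> Sf n b l c = 0"
proof (cases "b < 0")
  case True then show ?thesis by (simp add: Sf_negb)
next
  case False
  assume a: "c + b < 0"
  show ?thesis unfolding Sf_def
  proof (rule sum.neutral, intro ballI)
    fix j assume "j \<in> {..nat b}"
    then have "c + int j < 0" using a False by auto
    then show "binom l (int j) * binom (int n) (c + int j) * binom (int n - c - int j - l - 1) (b - int j) = 0"
      by simp
  qed
qed

lemma Sf_low: "l \<ge> 0 \<Longrightarrow> c + l < 0 \<Longrightarrow> Sf n b l c = 0"
  unfolding Sf_def
proof (rule sum.neutral, intro ballI)
  fix j assume "l \<ge> 0" "c + l < 0"
  then have "binom l (int j) = 0 \<or> binom (int n) (c + int j) = 0"
    by (cases "int j > l") (auto simp: binom_vanish)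
  then show "binom l (int j) * binom (int n) (c + int j) * binom (int n - c - int j - l - 1) (b - int j) = 0"
    by auto
qed

lemma Sf_above: "c > int n \<Longrightarrow> Sf n b l c = 0"
  unfolding Sf_def
proof (rule sum.neutral, intro ballI)
  fix j assume "c > int n"
  then have "binom (int n) (c + int j) = 0" by (intro binom_vanish) auto
  then show "binom l (int j) * binom (int n) (c + int j) * binom (int n - c - int j - l - 1) (b - int j) = 0"
    by auto
qed

lemma Sf_0: "Sf n b 0 c = binom (int n) c * binom (int n - c - 1) b"
proof -
  have "Sf n b 0 c = (\<Sum>j\<in>{0}. binom 0 (int j) * binom (int n) (c + int j)
                  * binom (int n - c - int j - 0 - 1) (b - int j))"
    unfolding Sf_def by (rule sum.mono_neutral_right) (auto simp: binom_vanish)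
  then show ?thesis by simp
qed

lemma Sf_pascal: "Sf n b l c + Sf n (b-1) l c = Sf n b (l-1) c + Sf n (b-1) (l-1) (c+1)"
proof -
  define J where "J = Suc (nat b)"
  define X where "X j = binom (int n) (c + int j) * binom (int n - c - int j - l) (b - int j)" for j
  define g where "g j = binom (l - 1) (int j - 1) * X j" for j
  have J1: "nat b \<le> J" "nat (b - 1) \<le> J" by (auto simp: J_def)
  have 1: "Sf n b l c + Sf n (b-1) l c = (\<Sum>j\<le>J. binom l (int j) * X j)"
    unfolding Sf_ext[OF J1(1)] Sf_ext[OF J1(2)] sum.distrib[symmetric]
  proof (rule sum.cong)
    fix j assume "j \<in> {..J}"
    have p: "binom (int n - c - int j - l) (b - int j) = binom (int n - c - int j - l - 1) (b - int j)
       + binom (int n - c - int j - l - 1) (b - int j - 1)"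
      by (rule binom_pascal)
    show "binom l (int j) * binom (int n) (c + int j) * binom (int n - c - int j - l - 1) (b - int j) +
          binom l (int j) * binom (int n) (c + int j) * binom (int n - c - int j - l - 1) (b - 1 - int j) =
          binom l (int j) * X j"
      unfolding X_def p by (simp add: algebra_simps)
  qed simp
  have 2: "Sf n b (l-1) c = (\<Sum>j\<le>J. binom (l - 1) (int j) * X j)"
    unfolding Sf_ext[OF J1(1)] X_def by (rule sum.cong) (simp_all add: algebra_simps)
  have 3: "Sf n (b-1) (l-1) (c+1) = (\<Sum>j\<le>J. g (Suc j))"
    unfolding Sf_ext[OF J1(2)] X_def g_def by (rule sum.cong) (simp_all add: algebra_simps)
  have g0: "g 0 = 0" by (simp add: g_def)
  have gJ: "g (Suc J) = 0" by (simp add: g_def X_def J_def)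
  have 4: "(\<Sum>j\<le>J. g (Suc j)) = (\<Sum>j\<le>J. g j)"
    using sum.atMost_Suc_shift[of g J] sum.atMost_Suc[of g J] g0 gJ by simp
  have 5: "(\<Sum>j\<le>J. binom (l - 1) (int j) * X j) + (\<Sum>j\<le>J. g j) = (\<Sum>j\<le>J. binom l (int j) * X j)"
    unfolding sum.distrib[symmetric]
  proof (rule sum.cong)
    fix j
    have p: "binom l (int j) = binom (l - 1) (int j) + binom (l - 1) (int j - 1)" by (rule binom_pascal)
    show "binom (l - 1) (int j) * X j + g j = binom l (int j) * X j"
      unfolding p g_def by (simp add: algebra_simps)
  qed simp
  show ?thesis using 1 2 3 4 5 by simp
qed

lemma Sf_m1: "Sf n b (-1) c + Sf n (b-1) (-1) (c+1) = multinom (int n) (int n - b - c) c"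
proof -
  have "Sf n b (-1) c + Sf n (b-1) (-1) (c+1) = Sf n b 0 c + Sf n (b-1) 0 c"
    using Sf_pascal[of n b 0 c] by simp
  also have "\<dots> = binom (int n) c * (binom (int n - c - 1) b + binom (int n - c - 1) (b - 1))"
    by (simp add: Sf_0 algebra_simps)
  also have "\<dots> = binom (int n) c * binom (int n - c) b"
    using binom_pascal[of "int n - c" b] by simp
  also have "\<dots> = multinom (int n) (int n - b - c) c"
    by (simp add: multinom_binom)
  finally show ?thesis .
qed

definition Tp :: "nat \<Rightarrow> nat \<Rightarrow> int \<Rightarrow> int \<Rightarrow> int" where
  "Tp n k b C = (\<Sum>l\<le>nat (C + b). Sf n b (int l) (C - int l * (int k + 1)))"

lemma Tp_ext:
  assumes "nat (C + b) \<le> L"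
  shows "Tp n k b C = (\<Sum>l\<le>L. Sf n b (int l) (C - int l * (int k + 1)))"
  unfolding Tp_def
proof (rule sum.mono_neutral_left)
  show "\<forall>i\<in>{..L} - {..nat (C + b)}. Sf n b (int i) (C - int i * (int k + 1)) = 0"
  proof
    fix i assume "i \<in> {..L} - {..nat (C + b)}"
    then have "int i > C + b" by auto
    moreover have "int i * (int k + 1) \<ge> int i" by (simp add: algebra_simps)
    ultimately show "Sf n b (int i) (C - int i * (int k + 1)) = 0"
      by (intro Sf_below) linarith
  qed
qed (use assms in auto)

lemma Tp_neg: "C < 0 \<Longrightarrow> Tp n k b C = 0"
  unfolding Tp_def
proof (rule sum.neutral, intro ballI)
  fix i assume "C < 0"
  moreover have "int i * int k \<ge> 0" by simp
  moreover have "C - int i * (int k + 1) + int i = C - int i * int k" by (simp add: algebra_simps)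
  ultimately have h: "C - int i * (int k + 1) + int i < 0" by linarith
  show "Sf n b (int i) (C - int i * (int k + 1)) = 0"
    by (rule Sf_low) (use h in auto)
qed

lemma Tp_negb: "b < 0 \<Longrightarrow> Tp n k b C = 0"
  unfolding Tp_def by (rule sum.neutral) (simp add: Sf_negb)

lemma Tp_rec:
  "Tp n k b c - Tp n k b (c - 1 - int k) + Tp n k (b - 1) c - Tp n k (b - 1) (c - int k)
   = multinom (int n) (int n - b - c) c"
proof -
  define K where "K = int k + 1"
  define L where "L = Suc (nat (c + b))"
  define F0 where "F0 l = Sf n b (int l) (c - int l * K)" for l
  define F2 where "F2 l = Sf n (b - 1) (int l) (c - int l * K)" for l
  define F1 where "F1 l = Sf n b (int l - 1) (c - int l * K)" for l
  define F3 where "F3 l = Sf n (b - 1) (int l - 1) (c - int l * K + 1)" for l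
  have KL: "int (Suc L) * K \<ge> int (Suc L)" by (simp add: K_def algebra_simps)
  have t0: "Tp n k b c = (\<Sum>l\<le>L. F0 l)"
    unfolding F0_def K_def by (rule Tp_ext) (simp add: L_def)
  have t2: "Tp n k (b - 1) c = (\<Sum>l\<le>L. F2 l)"
    unfolding F2_def K_def by (rule Tp_ext) (simp add: L_def)
  have t1: "Tp n k b (c - 1 - int k) = (\<Sum>l\<le>L. F1 (Suc l))"
  proof -
    have "Tp n k b (c - 1 - int k) = (\<Sum>l\<le>L. Sf n b (int l) (c - 1 - int k - int l * (int k + 1)))"
      by (rule Tp_ext) (simp add: L_def)
    also have "\<dots> = (\<Sum>l\<le>L. F1 (Suc l))"
      by (rule sum.cong) (simp_all add: F1_def K_def algebra_simps)
    finally show ?thesis .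
  qed
  have t3: "Tp n k (b - 1) (c - int k) = (\<Sum>l\<le>L. F3 (Suc l))"
  proof -
    have "Tp n k (b - 1) (c - int k) = (\<Sum>l\<le>L. Sf n (b - 1) (int l) (c - int k - int l * (int k + 1)))"
      by (rule Tp_ext) (simp add: L_def)
    also have "\<dots> = (\<Sum>l\<le>L. F3 (Suc l))"
      by (rule sum.cong) (simp_all add: F3_def K_def algebra_simps)
    finally show ?thesis .
  qed
  have Lgt: "int (Suc L) > c + b" by (simp add: L_def)
  have F1L: "F1 (Suc L) = 0" unfolding F1_def
    by (rule Sf_below) (use KL Lgt in linarith)
  have F3L: "F3 (Suc L) = 0" unfolding F3_def
    by (rule Sf_below) (use KL Lgt in linarith)
  have s1: "(\<Sum>l\<le>L. F1 (Suc l)) = (\<Sum>l\<le>L. F1 l) - F1 0"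
    using sum.atMost_Suc_shift[of F1 L] sum.atMost_Suc[of F1 L] F1L by simp
  have s3: "(\<Sum>l\<le>L. F3 (Suc l)) = (\<Sum>l\<le>L. F3 l) - F3 0"
    using sum.atMost_Suc_shift[of F3 L] sum.atMost_Suc[of F3 L] F3L by simp
  have pas: "(\<Sum>l\<le>L. F0 l) + (\<Sum>l\<le>L. F2 l) = (\<Sum>l\<le>L. F1 l) + (\<Sum>l\<le>L. F3 l)"
    unfolding sum.distrib[symmetric]
    by (rule sum.cong) (simp_all add: F0_def F1_def F2_def F3_def Sf_pascal)
  have "F1 0 + F3 0 = multinom (int n) (int n - b - c) c"
    using Sf_m1[of n b c] by (simp add: F1_def F3_def)
  then show ?thesis using t0 t1 t2 t3 s1 s3 pas by simp
qed

definition D :: "nat \<Rightarrow> nat \<Rightarrow> int \<Rightarrow> int \<Rightarrow> int" where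
  "D n k b c = Tp n k b c - Tp n k b (c - 1)"

lemma D_rec:
  "D n k b c - D n k b (c - 1 - int k) + D n k (b - 1) c - D n k (b - 1) (c - int k)
   = multinom (int n) (int n - b - c) c - multinom (int n) (int n - b - (c - 1)) (c - 1)"
proof -
  have a: "c - 1 - int k - 1 = (c - 1) - 1 - int k" "c - int k - 1 = (c - 1) - int k" by simp_all
  show ?thesis using Tp_rec[of n k b c] Tp_rec[of n k b "c - 1"] unfolding D_def a by simp
qed

lemma U_sym: "U n k a c = U n k c a"
proof -
  have 1: "U n k a c = (if a < 0 \<or> c < 0 \<or> int n - a - c < 0 then 0
     else if a < c then U n k c a
     else multinom (int n) a c - multinom (int n) (a + 1) (c - 1) - U n k (a + 1) c
          + U n k (a + 1 + int k) (c - 1 - int k) + U n k (a + 1 + int k) (c - int k))"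
    by (rule U.simps)
  have 2: "U n k c a = (if c < 0 \<or> a < 0 \<or> int n - c - a < 0 then 0
     else if c < a then U n k a c
     else multinom (int n) c a - multinom (int n) (c + 1) (a - 1) - U n k (c + 1) a
          + U n k (c + 1 + int k) (a - 1 - int k) + U n k (c + 1 + int k) (a - int k))"
    by (rule U.simps)
  show ?thesis
  proof (cases "a < 0 \<or> c < 0 \<or> int n - a - c < 0")
    case True then show ?thesis using 1 2 by auto
  next
    case False
    then show ?thesis using 1 2 by (cases "a < c"; cases "c < a") auto
  qed
qed

lemma U_D: "c \<le> a \<Longrightarrow> U n k a c = D n k (int n - a - c) c"
proof (induction "nat (int n + 1 - a)" arbitrary: a c rule: less_induct)
  case less
  have 1: "U n k a c = (if a < 0 \<or> c < 0 \<or> int n - a - c < 0 then 0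
     else if a < c then U n k c a
     else multinom (int n) a c - multinom (int n) (a + 1) (c - 1) - U n k (a + 1) c
          + U n k (a + 1 + int k) (c - 1 - int k) + U n k (a + 1 + int k) (c - int k))"
    by (rule U.simps)
  show ?case
  proof (cases "a < 0 \<or> c < 0 \<or> int n - a - c < 0")
    case True
    then have "c < 0 \<or> int n - a - c < 0" using less.prems by auto
    then have "D n k (int n - a - c) c = 0"
      by (auto simp: D_def Tp_neg Tp_negb)
    then show ?thesis using 1 True by simp
  next
    case False
    have an: "a \<le> int n" using False by simp
    have h1: "U n k (a + 1) c = D n k (int n - (a + 1) - c) c"
      by (rule less.hyps) (use an less.prems in auto)
    have h2: "U n k (a + 1 + int k) (c - 1 - int k) = D n k (int n - (a + 1 + int k) - (c - 1 - int k)) (c - 1 - int k)"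
      by (rule less.hyps) (use an less.prems in auto)
    have h3: "U n k (a + 1 + int k) (c - int k) = D n k (int n - (a + 1 + int k) - (c - int k)) (c - int k)"
      by (rule less.hyps) (use an less.prems in auto)
    have e: "int n - (a + 1) - c = (int n - a - c) - 1"
       "int n - (a + 1 + int k) - (c - 1 - int k) = int n - a - c"
       "int n - (a + 1 + int k) - (c - int k) = (int n - a - c) - 1"
       "int n - (int n - a - c) - c = a"
       "int n - (int n - a - c) - (c - 1) = a + 1" by simp_all
    have "U n k a c = multinom (int n) a c - multinom (int n) (a + 1) (c - 1) - U n k (a + 1) c
          + U n k (a + 1 + int k) (c - 1 - int k) + U n k (a + 1 + int k) (c - int k)"
      using 1 False less.prems by simp
    then show ?thesis using D_rec[of n k "int n - a - c" c] unfolding h1 h2 h3 e by simp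
  qed
qed

lemma Sf_l0: "Sf n b 0 c + Sf n (b - 1) 0 c = multinom (int n) (int n - b - c) c"
  using Sf_pascal[of n b 0 c] Sf_m1[of n b c] by simp

lemma Sf_refl0: "Sf n b 0 c = Sf n b (-1) (int n - b - c)"
proof -
  have A: "\<forall>c. Sf n (int m - 1) 0 c = Sf n (int m - 1) (-1) (int n - (int m - 1) - c)" for m
  proof (induction m)
    case 0 then show ?case by (simp add: Sf_negb)
  next
    case (Suc m)
    show ?case
    proof
      fix c
      define b where "b = int m"
      have ih: "Sf n (b - 1) 0 c = Sf n (b - 1) (-1) (int n - b - c + 1)"
        using Suc.IH b_def by (simp add: algebra_simps)
      have m1: "Sf n b (-1) (int n - b - c) + Sf n (b - 1) (-1) (int n - b - c + 1)
          = multinom (int n) c (int n - b - c)"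
        using Sf_m1[of n b "int n - b - c"] by simp
      have "Sf n b 0 c = Sf n b (-1) (int n - b - c)"
        using Sf_l0[of n b c] m1 ih multinom_sym[of "int n" c "int n - b - c"] by simp
      then show "Sf n (int (Suc m) - 1) 0 c = Sf n (int (Suc m) - 1) (-1) (int n - (int (Suc m) - 1) - c)"
        by (simp add: b_def)
    qed
  qed
  show ?thesis
  proof (cases "b < 0")
    case True then show ?thesis by (simp add: Sf_negb)
  next
    case False
    then have "b = int (Suc (nat b)) - 1" by simp
    then show ?thesis using A[of "Suc (nat b)"] by metis
  qed
qed

lemma Sf_refl: "Sf n b (int l) c = Sf n b (-1 - int l) (int n - b - c)"
proof (induction l arbitrary: b c)
  case 0 then show ?case using Sf_refl0 by simp
next
  case (Suc l)
  note IHl = Suc.IH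
  have "\<forall>c. Sf n (int m - 1) (int l + 1) c = Sf n (int m - 1) (-2 - int l) (int n - (int m - 1) - c)" for m
  proof (induction m)
    case 0 then show ?case by (simp add: Sf_negb)
  next
    case (Suc m)
    show ?case
    proof
      fix c
      define b where "b = int m"
      have ihb: "Sf n (b - 1) (int l + 1) c = Sf n (b - 1) (-2 - int l) (int n - b - c + 1)"
        using Suc.IH b_def by (simp add: algebra_simps)
      have ihl1: "Sf n b (int l) c = Sf n b (-1 - int l) (int n - b - c)"
        using IHl by simp
      have ihl2: "Sf n (b - 1) (int l) (c + 1) = Sf n (b - 1) (-1 - int l) (int n - b - c)"
        using IHl[of "b - 1" "c + 1"] by (simp add: algebra_simps)
      have p1: "Sf n b (int l + 1) c + Sf n (b - 1) (int l + 1) c = Sf n b (int l) c + Sf n (b - 1) (int l) (c + 1)"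
        using Sf_pascal[of n b "int l + 1" c] by simp
      have p2: "Sf n b (-1 - int l) (int n - b - c) + Sf n (b - 1) (-1 - int l) (int n - b - c)
          = Sf n b (-2 - int l) (int n - b - c) + Sf n (b - 1) (-2 - int l) (int n - b - c + 1)"
      proof -
        have e: "- 1 - int l - 1 = -2 - int l" by simp
        show ?thesis using Sf_pascal[of n b "-1 - int l" "int n - b - c"] unfolding e by simp
      qed
      have "Sf n b (int l + 1) c = Sf n b (-2 - int l) (int n - b - c)"
        using ihb ihl1 ihl2 p1 p2 by simp
      then show "Sf n (int (Suc m) - 1) (int l + 1) c = Sf n (int (Suc m) - 1) (-2 - int l) (int n - (int (Suc m) - 1) - c)"
        by (simp add: b_def)
    qed
  qed
  note A = this
  show ?case
  proof (cases "b < 0")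
    case True then show ?thesis by (simp add: Sf_negb)
  next
    case False
    then have bb: "b = int (Suc (nat b)) - 1" by simp
    have X: "Sf n b (int l + 1) c = Sf n b (-2 - int l) (int n - b - c)"
      using A[of "Suc (nat b)"] bb by metis
    have e1: "- 1 - int (Suc l) = -2 - int l" by simp
    have e2: "int (Suc l) = int l + 1" by simp
    show ?thesis by (subst e1, subst e2, rule X)
  qed
qed

lemma term_c_eq:
  assumes "B \<ge> 0"
  shows "term_c n k B C' c = (if c mod (int k + 1) = C' mod (int k + 1)
           then Sf n B ((C' - c) div (int k + 1)) c else 0)"
proof -
  have sa: "Sum_any (\<lambda>j::nat. binom l (int j) * binom (int n) (c + int j)
                * binom (int n - c - int j - l - 1) (B - int j)) = Sf n B l c" for l
    unfolding Sf_def
  proof (rule Sum_any.expand_superset)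
    show "{a. binom l (int a) * binom (int n) (c + int a) * binom (int n - c - int a - l - 1) (B - int a) \<noteq> 0} \<subseteq> {..nat B}"
    proof
      fix x assume x: "x \<in> {a. binom l (int a) * binom (int n) (c + int a) * binom (int n - c - int a - l - 1) (B - int a) \<noteq> 0}"
      show "x \<in> {..nat B}"
      proof (rule ccontr)
        assume "x \<notin> {..nat B}"
        then have "B - int x < 0" using assms by auto
        then show False using x by simp
      qed
    qed
  qed simp
  show ?thesis unfolding term_c_def Let_def sa by simp
qed

lemma Sum_term:
  assumes "B \<ge> 0"
  shows "finite {c. term_c n k B C' c \<noteq> 0} \<and>
    Sum_any (term_c n k B C') = Tp n k B C' + Tp n k B (int n - B - int k - 1 - C')"
proof -
  define K where "K = int k + 1"
  have K: "K \<ge> 1" by (simp add: K_def)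
  define L where "L = Suc (nat (\<bar>C'\<bar> + B + int n))"
  define g1 where "g1 l = C' - int l * K" for l :: nat
  define g2 where "g2 l = C' + (int l + 1) * K" for l :: nat
  define f where "f = term_c n k B C'"
  have feq: "f c = (if c mod K = C' mod K then Sf n B ((C' - c) div K) c else 0)" for c
    unfolding f_def K_def by (rule term_c_eq[OF assms])
  have supp: "{c. f c \<noteq> 0} \<subseteq> g1 ` {..L} \<union> g2 ` {..L}"
  proof
    fix c assume "c \<in> {c. f c \<noteq> 0}"
    then have md: "c mod K = C' mod K" and nz: "Sf n B ((C' - c) div K) c \<noteq> 0"
      using feq[of c] by (auto split: if_splits)
    have c1: "c + B \<ge> 0" using nz Sf_below by force
    have c2: "c \<le> int n" using nz Sf_above by force
    have "K dvd (C' - c)" using md[symmetric] by (simp add: mod_eq_dvd_iff)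
    then obtain q where q: "C' - c = K * q" by (auto elim: dvdE)
    show "c \<in> g1 ` {..L} \<union> g2 ` {..L}"
    proof (cases "q \<ge> 0")
      case True
      have "q \<le> K * q" using True K by (simp add: mult_le_cancel_right1 mult.commute)
      then have "nat q \<le> L" using q c1 by (simp add: L_def)
      moreover have "c = g1 (nat q)" using q True by (simp add: g1_def algebra_simps)
      ultimately show ?thesis by auto
    next
      case False
      define m where "m = nat (- q - 1)"
      have mq: "int m + 1 = - q" using False by (simp add: m_def)
      have "(int m + 1) \<le> (int m + 1) * K" using K by simp
      moreover have "(int m + 1) * K = c - C'" using q mq by (simp add: algebra_simps)
      ultimately have "int m \<le> \<bar>C'\<bar> + B + int n" using c2 assms abs_ge_minus_self[of C'] by linarith
      then have "m \<le> L" by (simp add: L_def)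
      moreover have "c = g2 m" using q mq by (simp add: g2_def algebra_simps)
      ultimately show ?thesis by auto
    qed
  qed
  have fin: "finite (g1 ` {..L} \<union> g2 ` {..L})" by simp
  have disj: "g1 ` {..L} \<inter> g2 ` {..L} = {}"
  proof -
    have "g1 l < g2 m" for l m
    proof -
      have "int l * K \<ge> 0" "(int m + 1) * K > 0" using K by simp_all
      then show ?thesis by (simp add: g1_def g2_def)
    qed
    then show ?thesis by (auto simp: less_irrefl) (metis less_irrefl)
  qed
  have inj1: "inj_on g1 {..L}" using K by (auto simp: inj_on_def g1_def)
  have inj2: "inj_on g2 {..L}" using K by (auto simp: inj_on_def g2_def)
  have v1: "f (g1 l) = Sf n B (int l) (C' - int l * K)" for l
  proof -
    have "(C' - int l * K) mod K = C' mod K"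
      using mod_mult_self1[of C' "- int l" K] by (simp add: algebra_simps)
    moreover have "(C' - (C' - int l * K)) div K = int l" using K by simp
    ultimately show ?thesis by (simp add: feq g1_def)
  qed
  have v2: "f (g2 l) = Sf n B (int l) ((int n - B - int k - 1 - C') - int l * (int k + 1))" for l
  proof -
    have "(C' + (int l + 1) * K) mod K = C' mod K"
      using mod_mult_self1[of C' "int l + 1" K] by (simp add: algebra_simps)
    moreover have "(C' - (C' + (int l + 1) * K)) div K = -1 - int l"
    proof -
      have "C' - (C' + (int l + 1) * K) = (-1 - int l) * K" by (simp add: algebra_simps)
      then show ?thesis using K by simp
    qed
    ultimately have "f (g2 l) = Sf n B (-1 - int l) (C' + (int l + 1) * K)"
      by (simp add: feq g2_def)
    also have "\<dots> = Sf n B (int l) (int n - B - (C' + (int l + 1) * K))"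
      using Sf_refl[of n B l "int n - B - (C' + (int l + 1) * K)"] by simp
    also have "int n - B - (C' + (int l + 1) * K) = (int n - B - int k - 1 - C') - int l * (int k + 1)"
      by (simp add: K_def algebra_simps)
    finally show ?thesis .
  qed
  have "Sum_any f = sum f (g1 ` {..L} \<union> g2 ` {..L})"
    by (rule Sum_any.expand_superset[OF fin supp])
  also have "\<dots> = sum f (g1 ` {..L}) + sum f (g2 ` {..L})"
    by (rule sum.union_disjoint) (use disj in auto)
  also have "\<dots> = (\<Sum>l\<le>L. f (g1 l)) + (\<Sum>l\<le>L. f (g2 l))"
    by (simp add: sum.reindex[OF inj1] sum.reindex[OF inj2])
  also have "\<dots> = Tp n k B C' + Tp n k B (int n - B - int k - 1 - C')"
  proof -
    have "Tp n k B C' = (\<Sum>l\<le>L. f (g1 l))"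
      unfolding v1 K_def by (rule Tp_ext) (simp add: L_def)
    moreover have "Tp n k B (int n - B - int k - 1 - C') = (\<Sum>l\<le>L. f (g2 l))"
      unfolding v2 by (rule Tp_ext) (use assms abs_ge_minus_self[of C'] in \<open>simp add: L_def nat_le_iff\<close>)
    ultimately show ?thesis by simp
  qed
  finally show ?thesis using finite_subset[OF supp fin] by (simp add: f_def)
qed

theorem lemma4p21:
  fixes n k :: nat and A C :: int
  assumes "n \<ge> 1" and "k \<ge> 1" and "A \<ge> 0" and "C \<ge> 0"
    and "int n - A - C \<ge> 0" and "0 \<le> A - C" and "A - C < int k"
  shows "finite {c. term_c n k (int n - A - C) C c \<noteq> 0}
    \<and> finite {c. term_c n k (int n - A - C) (C - 1) c \<noteq> 0}
    \<and> U n k A C - U n k (A - int k) (C + int k)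
      = Sum_any (term_c n k (int n - A - C) C) - Sum_any (term_c n k (int n - A - C) (C - 1))"
proof -
  define B where "B = int n - A - C"
  have B: "B \<ge> 0" using assms by (simp add: B_def)
  note s1 = Sum_term[OF B, of n k C]
  note s2 = Sum_term[OF B, of n k "C - 1"]
  have u1: "U n k A C = D n k B C" using U_D[of C A n k] assms by (simp add: B_def)
  have u2: "U n k (A - int k) (C + int k) = D n k B (A - int k)"
  proof -
    have "U n k (A - int k) (C + int k) = U n k (C + int k) (A - int k)" by (rule U_sym)
    also have "\<dots> = D n k (int n - (C + int k) - (A - int k)) (A - int k)"
      by (rule U_D) (use assms in simp)
    finally show ?thesis by (simp add: B_def algebra_simps)
  qed
  have e1: "int n - B - int k - 1 - C = A - int k - 1" by (simp add: B_def)
  have e2: "int n - B - int k - 1 - (C - 1) = A - int k" by (simp add: B_def)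
  have "U n k A C - U n k (A - int k) (C + int k)
      = Sum_any (term_c n k B C) - Sum_any (term_c n k B (C - 1))"
    using s1 s2 unfolding u1 u2 e1 e2 D_def by simp
  then show ?thesis using s1 s2 by (simp add: B_def)
qed

end
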